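(* For every ring $R$ and every nonnegative integer $n$, the closure of $\mathcal{O}^n_0(R)$ in $R^R$ is contained in $\mathcal{D}^n(R)$.
   Context: Rings are commutative with unit. A derivation on $R$ is a map $d\colon R\to R$ with $d(x+y)=d(x)+d(y)$ and $d(xy)=d(x)y+d(y)x$. Inductively: $\mathcal{D}^0(R)=\{0\}$; for $n>0$, $D\in\mathcal{D}^n(R)$ if $D$ is additive and $D(xy)-D(x)y-D(y)x=B(x,y)$ for all $x,y\in R$, where $B$ in each variable separately is in $\mathcal{D}^{n-1}(R)$. A differential operator of degree at most $n$ on $R$ is an $R$-linear combination of finitely many maps $d_1\circ\cdots\circ d_k$, $d_i$ derivations on $R$, $k\le n$ (for $k=0$ the identity map). $\mathcal{O}^n_0(R)$ is the set of differential operators $D$ of degree at most $n$ with $D(1)=0$. $R^R$ carries the product topology with $R$ discrete. *)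

theory Defs
  imports "HOL-Analysis.Analysis"
begin

definition is_derivation :: "('a::comm_ring_1 \<Rightarrow> 'a) \<Rightarrow> bool" where
  "is_derivation d \<longleftrightarrow>
     (\<forall>x y. d (x + y) = d x + d y) \<and> (\<forall>x y. d (x * y) = d x * y + d y * x)"

fun Dcl :: "nat \<Rightarrow> ('a::comm_ring_1 \<Rightarrow> 'a) set" where
  "Dcl 0 = {\<lambda>_. 0}"
| "Dcl (Suc n) = {D. (\<forall>x y. D (x + y) = D x + D y) \<and>
      (\<forall>x. (\<lambda>y. D (x * y) - D x * y - D y * x) \<in> Dcl n) \<and>
      (\<forall>y. (\<lambda>x. D (x * y) - D x * y - D y * x) \<in> Dcl n)}"

definition diff_monomials :: "nat \<Rightarrow> ('a::comm_ring_1 \<Rightarrow> 'a) set" where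
  "diff_monomials n = {foldr (\<circ>) ds id | ds. length ds \<le> n \<and> (\<forall>d\<in>set ds. is_derivation d)}"

definition diff_ops :: "nat \<Rightarrow> ('a::comm_ring_1 \<Rightarrow> 'a) set" where
  "diff_ops n = {(\<lambda>x. \<Sum>i<m. c i * M i x) | (m::nat) c M. \<forall>i<m. M i \<in> diff_monomials n}"

definition O0 :: "nat \<Rightarrow> ('a::comm_ring_1 \<Rightarrow> 'a) set" where
  "O0 n = {D \<in> diff_ops n. D 1 = 0}"

definition RR_topology :: "('a \<Rightarrow> 'a) topology" where
  "RR_topology = product_topology (\<lambda>_. discrete_topology UNIV) UNIV"

end

theory Submission
  imports Defs
begin

lemma Dcl_zero: "(\<lambda>_. 0) \<in> Dcl n"
  by (induction n) auto

lemma Dcl_add: "D \<in> Dcl n \<Longrightarrow> E \<in> Dcl n \<Longrightarrow> (\<lambda>x. D x + E x) \<in> Dcl n"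
proof (induction n arbitrary: D E)
  case 0 then show ?case by simp
next
  case (Suc n)
  have A: "\<forall>x y. D (x + y) = D x + D y" "\<forall>x y. E (x + y) = E x + E y"
    using Suc.prems by auto
  have "(\<lambda>y. (D (x * y) + E (x * y)) - (D x + E x) * y - (D y + E y) * x) \<in> Dcl n" for x
  proof -
    have "(\<lambda>y. (\<lambda>y. D (x * y) - D x * y - D y * x) y + (\<lambda>y. E (x * y) - E x * y - E y * x) y) \<in> Dcl n"
      using Suc by auto
    moreover have "(\<lambda>y. (\<lambda>y. D (x * y) - D x * y - D y * x) y + (\<lambda>y. E (x * y) - E x * y - E y * x) y)
       = (\<lambda>y. (D (x * y) + E (x * y)) - (D x + E x) * y - (D y + E y) * x)"
      by (auto simp: algebra_simps)
    ultimately show ?thesis by simp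
  qed
  moreover have "(\<lambda>x. (D (x * y) + E (x * y)) - (D x + E x) * y - (D y + E y) * x) \<in> Dcl n" for y
  proof -
    have "(\<lambda>x. (\<lambda>x. D (x * y) - D x * y - D y * x) x + (\<lambda>x. E (x * y) - E x * y - E y * x) x) \<in> Dcl n"
      using Suc by auto
    moreover have "(\<lambda>x. (\<lambda>x. D (x * y) - D x * y - D y * x) x + (\<lambda>x. E (x * y) - E x * y - E y * x) x)
       = (\<lambda>x. (D (x * y) + E (x * y)) - (D x + E x) * y - (D y + E y) * x)"
      by (auto simp: algebra_simps)
    ultimately show ?thesis by simp
  qed
  ultimately show ?case using A by (simp add: algebra_simps)
qed

lemma Dcl_scale: "D \<in> Dcl n \<Longrightarrow> (\<lambda>x. c * D x) \<in> Dcl n"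
proof (induction n arbitrary: D)
  case 0 then show ?case by simp
next
  case (Suc n)
  have A: "\<forall>x y. D (x + y) = D x + D y" using Suc.prems by auto
  have "(\<lambda>y. c * D (x * y) - c * D x * y - c * D y * x) \<in> Dcl n" for x
  proof -
    have "(\<lambda>y. c * (\<lambda>y. D (x * y) - D x * y - D y * x) y) \<in> Dcl n"
      using Suc by auto
    moreover have "(\<lambda>y. c * (\<lambda>y. D (x * y) - D x * y - D y * x) y)
       = (\<lambda>y. c * D (x * y) - c * D x * y - c * D y * x)"
      by (auto simp: algebra_simps)
    ultimately show ?thesis by simp
  qed
  moreover have "(\<lambda>x. c * D (x * y) - c * D x * y - c * D y * x) \<in> Dcl n" for y
  proof -
    have "(\<lambda>x. c * (\<lambda>x. D (x * y) - D x * y - D y * x) x) \<in> Dcl n"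
      using Suc by auto
    moreover have "(\<lambda>x. c * (\<lambda>x. D (x * y) - D x * y - D y * x) x)
       = (\<lambda>x. c * D (x * y) - c * D x * y - c * D y * x)"
      by (auto simp: algebra_simps)
    ultimately show ?thesis by simp
  qed
  ultimately show ?case using A by (simp add: algebra_simps)
qed

lemma Dcl_mono_Suc: "D \<in> Dcl n \<Longrightarrow> D \<in> Dcl (Suc n)"
proof (induction n arbitrary: D)
  case 0 then show ?case using Dcl_zero[of 0] by simp
next
  case (Suc n)
  then show ?case by (simp only: Dcl.simps) blast
qed

lemma Dcl_mono: "D \<in> Dcl m \<Longrightarrow> m \<le> n \<Longrightarrow> D \<in> Dcl n"
proof (induction n)
  case 0 then show ?case by simp
next
  case (Suc n) then show ?case by (metis Dcl_mono_Suc le_Suc_eq)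
qed

lemma deriv_Dcl1: "is_derivation d \<Longrightarrow> d \<in> Dcl 1"
  by (simp add: is_derivation_def algebra_simps)

lemma deriv_one: "is_derivation d \<Longrightarrow> d 1 = 0"
proof -
  assume "is_derivation d"
  then have "d (1 * 1) = d 1 * 1 + d 1 * 1" unfolding is_derivation_def by blast
  then have "d 1 = d 1 + d 1" by simp
  then show ?thesis by (metis add_cancel_right_right)
qed

lemma comp_deriv:
  assumes d: "is_derivation d"
  shows "E \<in> Dcl j \<Longrightarrow> (\<lambda>x. d (E x)) \<in> Dcl (Suc j)"
proof (induction j arbitrary: E)
  case 0
  have "d 0 = 0" using d by (metis add_cancel_right_right add_0 is_derivation_def)
  then show ?case using 0 Dcl_zero[of 1] by simp
next
  case (Suc j)
  have dadd: "\<And>x y. d (x + y) = d x + d y" and dmul: "\<And>x y. d (x * y) = d x * y + d y * x"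
    using d by (auto simp: is_derivation_def)
  have dsub: "\<And>x y. d (x - y) = d x - d y"
    by (metis add_diff_cancel dadd diff_add_cancel)
  have Eadd: "\<forall>x y. E (x + y) = E x + E y" using Suc.prems by auto
  have d1: "d \<in> Dcl (Suc j)" using Dcl_mono[OF deriv_Dcl1[OF d], of "Suc j"] by simp
  have "(\<lambda>y. d (E (x * y)) - d (E x) * y - d (E y) * x) \<in> Dcl (Suc j)" for x
  proof -
    have B: "(\<lambda>y. E (x * y) - E x * y - E y * x) \<in> Dcl j" using Suc.prems by auto
    have "(\<lambda>y. (\<lambda>y. E x * d y) y + ((\<lambda>y. d x * E y) y + (\<lambda>y. d (E (x * y) - E x * y - E y * x)) y)) \<in> Dcl (Suc j)"
      apply (rule Dcl_add) apply (rule Dcl_scale[OF d1])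
      apply (rule Dcl_add) apply (rule Dcl_scale) using Suc.prems apply blast
      using Suc.IH[OF B] by simp
    moreover have "(\<lambda>y. (\<lambda>y. E x * d y) y + ((\<lambda>y. d x * E y) y + (\<lambda>y. d (E (x * y) - E x * y - E y * x)) y))
        = (\<lambda>y. d (E (x * y)) - d (E x) * y - d (E y) * x)"
      by (rule ext, simp only: dsub dmul) (simp add: algebra_simps)
    ultimately show ?thesis by simp
  qed
  moreover have "(\<lambda>x. d (E (x * y)) - d (E x) * y - d (E y) * x) \<in> Dcl (Suc j)" for y
  proof -
    have B: "(\<lambda>x. E (x * y) - E x * y - E y * x) \<in> Dcl j" using Suc.prems by auto
    have "(\<lambda>x. (\<lambda>x. E y * d x) x + ((\<lambda>x. d y * E x) x + (\<lambda>x. d (E (x * y) - E x * y - E y * x)) x)) \<in> Dcl (Suc j)"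
      apply (rule Dcl_add) apply (rule Dcl_scale[OF d1])
      apply (rule Dcl_add) apply (rule Dcl_scale) using Suc.prems apply blast
      using Suc.IH[OF B] by simp
    moreover have "(\<lambda>x. (\<lambda>x. E y * d x) x + ((\<lambda>x. d y * E x) x + (\<lambda>x. d (E (x * y) - E x * y - E y * x)) x))
        = (\<lambda>x. d (E (x * y)) - d (E x) * y - d (E y) * x)"
      by (rule ext, simp only: dsub dmul) (simp add: algebra_simps)
    ultimately show ?thesis by simp
  qed
  ultimately show ?case using Eadd by (simp add: dadd)
qed

lemma foldr_derivs:
  "ds \<noteq> [] \<Longrightarrow> \<forall>d\<in>set ds. is_derivation d \<Longrightarrow>
     foldr (\<circ>) ds id \<in> Dcl (length ds) \<and> foldr (\<circ>) ds id 1 = 0"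
proof (induction ds)
  case Nil then show ?case by simp
next
  case (Cons d ds)
  then have d: "is_derivation d" by simp
  show ?case
  proof (cases "ds = []")
    case True
    then show ?thesis using deriv_Dcl1[OF d] deriv_one[OF d] by simp
  next
    case False
    have "\<forall>d\<in>set ds. is_derivation d" using Cons.prems by simp
    then have IH: "foldr (\<circ>) ds id \<in> Dcl (length ds)" "foldr (\<circ>) ds id 1 = 0" using Cons.IH[OF False] by blast+
    have m: "(\<lambda>x. d (foldr (\<circ>) ds id x)) \<in> Dcl (Suc (length ds))" by (rule comp_deriv[OF d IH(1)])
    have eq: "foldr (\<circ>) (d # ds) id = (\<lambda>x. d (foldr (\<circ>) ds id x))" by (simp add: fun_eq_iff)
    have "d 0 = 0" using d by (metis add_cancel_right_right add_0 is_derivation_def)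
    then have "foldr (\<circ>) (d # ds) id 1 = 0" unfolding eq using IH(2) by simp
    moreover have "foldr (\<circ>) (d # ds) id \<in> Dcl (length (d # ds))" unfolding eq length_Cons by (rule m)
    ultimately show ?thesis by blast
  qed
qed

lemma monomial_Dcl: "M \<in> diff_monomials n \<Longrightarrow> (\<lambda>x. M x - M 1 * x) \<in> Dcl n"
proof -
  assume "M \<in> diff_monomials n"
  then obtain ds where ds: "M = foldr (\<circ>) ds id" "length ds \<le> n" "\<forall>d\<in>set ds. is_derivation d"
    unfolding diff_monomials_def by auto
  show ?thesis
  proof (cases "ds = []")
    case True then show ?thesis using ds Dcl_zero[of n] by simp
  next
    case False
    then have "M \<in> Dcl (length ds)" "M 1 = 0" using foldr_derivs ds by auto
    then show ?thesis using Dcl_mono ds by auto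
  qed
qed

lemma O0_Dcl: "D \<in> O0 n \<Longrightarrow> D \<in> Dcl n"
proof -
  assume "D \<in> O0 n"
  then have D1: "D 1 = 0" and "D \<in> diff_ops n" by (simp_all add: O0_def)
  then have "\<exists>(m::nat) c M. D = (\<lambda>x. \<Sum>i<m. c i * M i x) \<and> (\<forall>i<m. M i \<in> diff_monomials n)"
    unfolding diff_ops_def by (simp only: mem_Collect_eq)
  then obtain m :: nat and c M where D: "D = (\<lambda>x. \<Sum>i<m. c i * M i x)" "\<forall>i<m. M i \<in> diff_monomials n"
    by blast
  have "(\<lambda>x. \<Sum>i<k. c i * (M i x - M i 1 * x)) \<in> Dcl n" if "k \<le> m" for k
    using that
  proof (induction k)
    case 0 then show ?case using Dcl_zero by simp
  next
    case (Suc k)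
    have a: "(\<lambda>x. \<Sum>i<k. c i * (M i x - M i 1 * x)) \<in> Dcl n" using Suc by simp
    have b: "(\<lambda>x. c k * (M k x - M k 1 * x)) \<in> Dcl n"
      using Dcl_scale[OF monomial_Dcl[of "M k" n]] D(2) Suc.prems by simp
    show ?case using Dcl_add[OF a b] by simp
  qed
  then have "(\<lambda>x. \<Sum>i<m. c i * (M i x - M i 1 * x)) \<in> Dcl n" by simp
  moreover have "(\<lambda>x. \<Sum>i<m. c i * (M i x - M i 1 * x)) = (\<lambda>x. D x - D 1 * x)"
    by (auto simp: D(1) algebra_simps sum_subtractf sum_distrib_right sum_distrib_left)
  ultimately show ?thesis using D1 by simp
qed

lemma Dcl_local:
  "(\<forall>F. finite F \<longrightarrow> (\<exists>E\<in>Dcl n. \<forall>z\<in>F. E z = D z)) \<Longrightarrow> D \<in> Dcl n"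
proof (induction n arbitrary: D)
  case 0
  have "D z = 0" for z using 0[rule_format, of "{z}"] by auto
  then show ?case by auto
next
  case (Suc n)
  have add: "D (x + y) = D x + D y" for x y
  proof -
    obtain E where E: "E \<in> Dcl (Suc n)" "\<forall>z\<in>{x,y,x+y}. E z = D z"
      using Suc.prems[rule_format, of "{x,y,x+y}"] by auto
    then show ?thesis by auto
  qed
  have L: "(\<lambda>y. D (x * y) - D x * y - D y * x) \<in> Dcl n" for x
  proof (rule Suc.IH, intro allI impI)
    fix F :: "'a set" assume F: "finite F"
    obtain E where E: "E \<in> Dcl (Suc n)" "\<forall>z\<in>insert x (F \<union> (\<lambda>y. x * y) ` F). E z = D z"
      using Suc.prems[rule_format, of "insert x (F \<union> (\<lambda>y. x * y) ` F)"] F by auto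
    have "(\<lambda>y. E (x * y) - E x * y - E y * x) \<in> Dcl n" using E(1) by simp
    moreover have "\<forall>z\<in>F. E (x * z) - E x * z - E z * x = D (x * z) - D x * z - D z * x" using E(2) by auto
    ultimately show "\<exists>E'\<in>Dcl n. \<forall>z\<in>F. E' z = D (x * z) - D x * z - D z * x"
      by (intro bexI[of _ "\<lambda>y. E (x * y) - E x * y - E y * x"]) simp_all
  qed
  have R: "(\<lambda>x. D (x * y) - D x * y - D y * x) \<in> Dcl n" for y
  proof (rule Suc.IH, intro allI impI)
    fix F :: "'a set" assume F: "finite F"
    obtain E where E: "E \<in> Dcl (Suc n)" "\<forall>z\<in>insert y (F \<union> (\<lambda>x. x * y) ` F). E z = D z"
      using Suc.prems[rule_format, of "insert y (F \<union> (\<lambda>x. x * y) ` F)"] F by auto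
    have "(\<lambda>x. E (x * y) - E x * y - E y * x) \<in> Dcl n" using E(1) by simp
    moreover have "\<forall>z\<in>F. E (z * y) - E z * y - E y * z = D (z * y) - D z * y - D y * z" using E(2) by auto
    ultimately show "\<exists>E'\<in>Dcl n. \<forall>z\<in>F. E' z = D (z * y) - D z * y - D y * z"
      by (intro bexI[of _ "\<lambda>x. E (x * y) - E x * y - E y * x"]) simp_all
  qed
  show ?case using add L R by simp
qed

lemma closure_local:
  assumes "f \<in> RR_topology closure_of S" "finite F"
  shows "\<exists>g\<in>S. \<forall>z\<in>F. g z = f z"
proof -
  let ?T = "PiE UNIV (\<lambda>z. if z \<in> F then {f z} else UNIV)"
  have "openin RR_topology ?T"
    unfolding RR_topology_def
    by (subst openin_PiE_gen) (auto intro: finite_subset[OF _ assms(2)])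
  moreover have "f \<in> ?T" by auto
  ultimately obtain g where "g \<in> S" "g \<in> ?T" using assms(1) by (auto simp: in_closure_of)
  then show ?thesis by (auto simp: PiE_iff split: if_splits)
qed

theorem lemma2p2:
  fixes n :: nat
  shows "RR_topology closure_of (O0 n :: ('a::comm_ring_1 \<Rightarrow> 'a) set) \<subseteq> Dcl n"
proof
  fix f :: "'a \<Rightarrow> 'a" assume f: "f \<in> RR_topology closure_of O0 n"
  show "f \<in> Dcl n"
  proof (rule Dcl_local, intro allI impI)
    fix F :: "'a set" assume "finite F"
    then obtain g where "g \<in> O0 n" "\<forall>z\<in>F. g z = f z" using closure_local[OF f] by blast
    then show "\<exists>E\<in>Dcl n. \<forall>z\<in>F. E z = f z" using O0_Dcl by blast
  qed
qed

end
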